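(* Let $R=[0,1]^2$, $s\in\mathbb{N}$ and $u=2^{-s}$. If $u\le\frac12$, then the $4$-dimensional volume of the union $\mathcal{B}_{close}$ of all close box pairs satisfies $\mathrm{vol}(\mathcal{B}_{close})\le4\pi u$.
   Context: For $p,q\in\mathbb{R}^2$ write $p\le q$ if both coordinates satisfy $\le$. $R$ is split into $2^s\times2^s$ congruent closed squares ("boxes") of side length $u$. A box pair is an ordered pair $(B_1,B_2)$ of boxes, viewed as the subset $B_1\times B_2\subset\mathbb{R}^4$; let $c_1,c_2$ be the centers of $B_1,B_2$. A box pair is close if $c_1\le c_2$ and $\|c_1-c_2\|_2<\sqrt u$. $\mathrm{vol}$ denotes $4$-dimensional Lebesgue measure. *)

theory Defs
  imports "HOL-Analysis.Analysis"
begin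

text \<open>Points of the plane are pairs of reals; the product norm on real \<times> real is Euclidean.
  Points of R^4 are pairs of points of the plane, with Lebesgue (Borel) measure lborel.\<close>

definition side :: "nat \<Rightarrow> real" where
  "side s = 1 / 2 ^ s"

definition box_sq :: "nat \<Rightarrow> nat \<Rightarrow> nat \<Rightarrow> (real \<times> real) set" where
  "box_sq s i j = {p. real i * side s \<le> fst p \<and> fst p \<le> (real i + 1) * side s \<and>
                      real j * side s \<le> snd p \<and> snd p \<le> (real j + 1) * side s}"

definition box_center :: "nat \<Rightarrow> nat \<Rightarrow> nat \<Rightarrow> real \<times> real" where
  "box_center s i j = ((real i + 1/2) * side s, (real j + 1/2) * side s)"

definition pt_le :: "real \<times> real \<Rightarrow> real \<times> real \<Rightarrow> bool" where
  "pt_le p q \<longleftrightarrow> fst p \<le> fst q \<and> snd p \<le> snd q"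

definition close_pair :: "nat \<Rightarrow> nat \<times> nat \<Rightarrow> nat \<times> nat \<Rightarrow> bool" where
  "close_pair s b1 b2 \<longleftrightarrow>
     (let c1 = box_center s (fst b1) (snd b1); c2 = box_center s (fst b2) (snd b2)
      in pt_le c1 c2 \<and> norm (c1 - c2) < sqrt (side s))"

definition B_close :: "nat \<Rightarrow> ((real \<times> real) \<times> (real \<times> real)) set" where
  "B_close s = \<Union> {box_sq s (fst b1) (snd b1) \<times> box_sq s (fst b2) (snd b2) | b1 b2.
       fst b1 < 2 ^ s \<and> snd b1 < 2 ^ s \<and> fst b2 < 2 ^ s \<and> snd b2 < 2 ^ s \<and> close_pair s b1 b2}"

end

theory Submission
  imports Defs
begin
lemma box_cbox: "box_sq s i j = cbox (real i * side s, real j * side s) ((real i + 1) * side s, (real j + 1) * side s)"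
  by (auto simp: box_sq_def cbox_def Basis_prod_def inner_prod_def)
lemma side_pos: "side s > 0" by (simp add: side_def)
lemma box_meas: "emeasure lborel (box_sq s i j \<times> box_sq s k l) = ennreal (side s ^ 4)"
  unfolding box_cbox
  apply (subst cbox_Pair_eq[symmetric])
  apply (subst emeasure_lborel_cbox_eq)
  using side_pos[of s]
  apply (simp add: Basis_prod_def prod.union_disjoint disjoint_iff prod.reindex inj_on_def algebra_simps)
  apply (simp add: inner_prod_def eval_nat_numeral)
  apply (simp add: zero_prod_def)
  done

lemma coord_bound:
  fixes i i' :: nat
  assumes "(real i + 1/2) * side s \<le> (real i' + 1/2) * side s"
    and "\<bar>(real i + 1/2) * side s - (real i' + 1/2) * side s\<bar> < sqrt (side s)"
  shows "i \<le> i' \<and> i' - i < nat \<lceil>sqrt (2^s)\<rceil>"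
proof -
  have u: "side s > 0" by (rule side_pos)
  have le: "i \<le> i'" using assms(1) u by (simp add: mult_le_cancel_right)
  have "real (i' - i) * side s < sqrt (side s)"
    using assms(2) le u by (simp add: of_nat_diff algebra_simps)
  hence "real (i' - i) < sqrt (side s) / side s" using u by (simp add: field_simps)
  also have "sqrt (side s) / side s = sqrt (2^s)"
  proof -
    have "sqrt (1 / 2^s) / (1 / 2^s) = (2::real)^s / sqrt (2^s)"
      by (simp add: real_sqrt_divide)
    also have "\<dots> = sqrt (2^s)" by (rule real_div_sqrt) simp
    finally show ?thesis by (simp add: side_def)
  qed
  finally have "real (i' - i) < sqrt (2^s)" .
  hence "real (i' - i) < real (nat \<lceil>sqrt (2^s)\<rceil>)" by linarith
  thus ?thesis using le by linarith
qed
lemma incl: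
  fixes s :: nat
  defines "m \<equiv> nat \<lceil>sqrt (2^s)\<rceil>"
  shows "B_close s \<subseteq> (\<Union>t\<in>({..<2^s} \<times> {..<2^s}) \<times> ({..<m} \<times> {..<m}).
     box_sq s (fst (fst t)) (snd (fst t)) \<times> box_sq s (fst (fst t) + fst (snd t)) (snd (fst t) + snd (snd t)))"
proof
  fix x assume "x \<in> B_close s"
  then obtain i j i' j' where b: "i < 2^s" "j < 2^s" "close_pair s (i,j) (i',j')"
    and x: "x \<in> box_sq s i j \<times> box_sq s i' j'"
    unfolding B_close_def by auto
  let ?c1 = "box_center s i j" and ?c2 = "box_center s i' j'"
  have pl: "pt_le ?c1 ?c2" and nm: "norm (?c1 - ?c2) < sqrt (side s)"
    using b(3) by (auto simp: close_pair_def Let_def)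
  have "\<bar>fst (?c1 - ?c2)\<bar> \<le> norm (?c1 - ?c2)"
    using norm_fst_le[of "fst (?c1 - ?c2)" "snd (?c1 - ?c2)"] by (simp only: prod.collapse real_norm_def)
  hence n1: "\<bar>fst ?c1 - fst ?c2\<bar> < sqrt (side s)" using nm by simp
  have "\<bar>snd (?c1 - ?c2)\<bar> \<le> norm (?c1 - ?c2)"
    by (metis norm_snd_le prod.collapse real_norm_def)
  hence n2: "\<bar>snd ?c1 - snd ?c2\<bar> < sqrt (side s)" using nm by simp
  have hi: "i \<le> i' \<and> i' - i < m"
    unfolding m_def
    by (rule coord_bound) (use pl n1 in \<open>auto simp: pt_le_def box_center_def\<close>)
  have hj: "j \<le> j' \<and> j' - j < m"
    unfolding m_def
    by (rule coord_bound) (use pl n2 in \<open>auto simp: pt_le_def box_center_def\<close>)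
  show "x \<in> (\<Union>t\<in>({..<2^s} \<times> {..<2^s}) \<times> ({..<m} \<times> {..<m}).
     box_sq s (fst (fst t)) (snd (fst t)) \<times> box_sq s (fst (fst t) + fst (snd t)) (snd (fst t) + snd (snd t)))"
    apply (rule UN_I[of "((i,j),(i'-i,j'-j))"])
    using b hi hj x by auto
qed

theorem lemma4:
  fixes s :: nat
  assumes "side s \<le> 1/2"
  shows "emeasure lborel (B_close s) \<le> ennreal (4 * pi * side s)"
proof -
  define m where "m = nat \<lceil>sqrt (2^s)\<rceil>"
  define I where "I = ({..<(2::nat)^s} \<times> {..<(2::nat)^s}) \<times> ({..<m} \<times> {..<m})"
  define f where "f = (\<lambda>t::(nat\<times>nat)\<times>(nat\<times>nat). box_sq s (fst (fst t)) (snd (fst t)) \<times> box_sq s (fst (fst t) + fst (snd t)) (snd (fst t) + snd (snd t)))"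
  have fin: "finite I" by (simp add: I_def)
  have "emeasure lborel (B_close s) \<le> emeasure lborel (\<Union>t\<in>I. f t)"
    apply (rule emeasure_mono)
    using incl[of s] apply (simp add: I_def f_def m_def)
    apply (rule sets.finite_UN[OF fin])
    by (auto simp: f_def box_cbox cbox_Pair_eq[symmetric])
  also have "\<dots> \<le> (\<Sum>t\<in>I. emeasure lborel (f t))"
    apply (rule emeasure_subadditive_finite[OF fin])
    by (auto simp: f_def box_cbox cbox_Pair_eq[symmetric])
  also have "\<dots> = (\<Sum>t\<in>I. ennreal (side s ^ 4))"
    by (simp add: f_def box_meas)
  also have "\<dots> = ennreal (real (card I) * side s ^ 4)"
    by (simp add: ennreal_of_nat_eq_real_of_nat ennreal_mult)
  also have "\<dots> \<le> ennreal (4 * pi * side s)"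
  proof (rule ennreal_leI)
    have u: "side s = 1 / 2^s" by (simp add: side_def)
    have cI: "real (card I) = (2^s)^2 * (real m)^2" by (simp add: I_def power2_eq_square)
    have N1: "(1::real) \<le> 2^s" by simp
    have sq1: "1 \<le> sqrt ((2::real)^s)" using N1 by simp
    have "0 \<le> sqrt ((2::real)^s)" by simp
    hence c0: "0 \<le> \<lceil>sqrt ((2::real)^s)\<rceil>" by linarith
    have "real m = of_int \<lceil>sqrt ((2::real)^s)\<rceil>" unfolding m_def using c0 by simp
    hence "real m \<le> sqrt (2^s) + 1" using of_int_ceiling_le_add_one[of "sqrt ((2::real)^s)"] by linarith
    hence "(real m)^2 \<le> (sqrt (2^s) + 1)^2" by (intro power_mono) auto
    also have "\<dots> \<le> (2 * sqrt (2^s))^2" using sq1 by (intro power_mono) auto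
    also have "\<dots> = 4 * 2^s" by (simp add: power_mult_distrib)
    finally have m2: "(real m)^2 \<le> 4 * 2^s" .
    have "real (card I) * side s ^ 4 = (real m)^2 * (1/2^s) * side s"
      unfolding cI u by (simp add: field_simps power2_eq_square eval_nat_numeral)
    also have "\<dots> \<le> 4 * side s"
    proof -
      have "(real m)^2 * (1/2^s) \<le> 4" using m2 by (simp add: field_simps)
      thus ?thesis using side_pos[of s] by (intro mult_right_mono) auto
    qed
    also have "\<dots> \<le> 4 * pi * side s" using side_pos[of s] pi_gt3 by simp
    finally show "real (card I) * side s ^ 4 \<le> 4 * pi * side s" .
  qed
  finally show ?thesis .
qed
end
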